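(* The relaxed composition $\uplus$ is not compositional with respect to stable models: there is no binary operation $\bowtie'$ mapping pairs of sets of interpretations to sets of interpretations such that $AS(\mathcal P_1\uplus\mathcal P_2)=AS(\mathcal P_1)\bowtie' AS(\mathcal P_2)$ for all program modules $\mathcal P_1,\mathcal P_2$ for which $\mathcal P_1\uplus\mathcal P_2$ is defined. (For instance, $\mathcal P_1=\langle\{a.\},\emptyset,\{a,b\},\emptyset\rangle$, $\mathcal Q_1=\langle\{a.\ \ \bot\leftarrow a,b.\},\emptyset,\{a,b\},\emptyset\rangle$, $\mathcal P_2=\mathcal Q_2=\langle\{b.\},\emptyset,\{b\},\emptyset\rangle$ satisfy $AS(\mathcal P_1)=AS(\mathcal Q_1)$, $AS(\mathcal P_2)=AS(\mathcal Q_2)$ but $AS(\mathcal P_1\uplus\mathcal P_2)\neq AS(\mathcal Q_1\uplus\mathcal Q_2)$.)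
   Context: A program module is a tuple $\mathcal P=\langle R,I,O,H\rangle$ where $R$ is a finite set of ground rules (normal rules $a\leftarrow b_1,\dots,b_m,not~c_1,\dots,not~c_n$, integrity constraints $\bot\leftarrow b_1,\dots,b_m,not~c_1,\dots,not~c_n$, and choice rules understood via their standard translation into normal rules), $I,O,H$ are pairwise disjoint finite sets of atoms (input, output, hidden atoms), every atom occurring in $R$ belongs to $At(\mathcal P)=I\cup O\cup H$, and no rule of $R$ has its head in $I$. For $M\subseteq At(\mathcal P)$, the reduct $R^M$ is obtained from $R$ by deleting every rule having some $not~c$ in its body with $c\in M$, and deleting all negative literals from the remaining rules. $M$ is a stable model of $\mathcal P$ iff $M$ satisfies all integrity constraints of $R$ and $M$ is the least model of the positive program $R^M\cup\{a.\mid a\in M\cap I\}$ (ignoring constraints). $AS(\mathcal P)$ denotes the set of stable models. Given $\mathcal P_1=\langle R_1,I_1,O_1,H_1\rangle$ and $\mathcal P_2=\langle R_2,I_2,O_2,H_2\rangle$, the relaxed composition $\mathcal P_1\uplus\mathcal P_2$ is defined iff $H_1\cap At(\mathcal P_2)=\emptyset$ and $H_2\cap At(\mathcal P_1)=\emptyset$, and then $\mathcal P_1\uplus\mathcal P_2=\langle R_1\cup R_2,(I_1\cup I_2)\setminus(O_1\cup O_2),O_1\cup O_2,H_1\cup H_2\rangle$. *)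

theory Defs
  imports Main
begin

text \<open>A normal rule a <- b1..bm, not c1..not cn is
  Normal a {b1..bm} {c1..cn}; an integrity constraint is Constraint {b..} {c..}.
  Choice rules are understood via their translation into normal rules, so they are
  not a separate constructor.\<close>

datatype 'a rule =
    Normal 'a "'a set" "'a set"
  | Constraint "'a set" "'a set"

fun pos_body :: "'a rule \<Rightarrow> 'a set" where
  "pos_body (Normal h p n) = p"
| "pos_body (Constraint p n) = p"

fun neg_body :: "'a rule \<Rightarrow> 'a set" where
  "neg_body (Normal h p n) = n"
| "neg_body (Constraint p n) = n"

fun rule_atoms :: "'a rule \<Rightarrow> 'a set" where
  "rule_atoms (Normal h p n) = insert h (p \<union> n)"
| "rule_atoms (Constraint p n) = p \<union> n"

fun heads :: "'a rule \<Rightarrow> 'a set" where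
  "heads (Normal h p n) = {h}"
| "heads (Constraint p n) = {}"

record 'a pmodule =
  Rules :: "'a rule set"
  Inp :: "'a set"
  Outp :: "'a set"
  Hid :: "'a set"

definition At :: "'a pmodule \<Rightarrow> 'a set" where
  "At P = Inp P \<union> Outp P \<union> Hid P"

definition wf_module :: "'a pmodule \<Rightarrow> bool" where
  "wf_module P \<longleftrightarrow>
     finite (Rules P) \<and> finite (Inp P) \<and> finite (Outp P) \<and> finite (Hid P)
   \<and> Inp P \<inter> Outp P = {} \<and> Inp P \<inter> Hid P = {} \<and> Outp P \<inter> Hid P = {}
   \<and> (\<forall>r\<in>Rules P. rule_atoms r \<subseteq> At P)
   \<and> (\<forall>r\<in>Rules P. finite (pos_body r) \<and> finite (neg_body r))
   \<and> (\<forall>r\<in>Rules P. heads r \<inter> Inp P = {})"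

text \<open>Reduct R^M: positive rules (head, positive body); constraints are dropped
  (they are checked separately).\<close>
definition reduct :: "'a rule set \<Rightarrow> 'a set \<Rightarrow> ('a \<times> 'a set) set" where
  "reduct R M = {(h, p) | h p n. Normal h p n \<in> R \<and> n \<inter> M = {}}"

definition least_model :: "('a \<times> 'a set) set \<Rightarrow> 'a set" where
  "least_model S = \<Inter> {X. \<forall>(h, p)\<in>S. p \<subseteq> X \<longrightarrow> h \<in> X}"

definition sat_constraints :: "'a rule set \<Rightarrow> 'a set \<Rightarrow> bool" where
  "sat_constraints R M \<longleftrightarrow>
     (\<forall>p n. Constraint p n \<in> R \<longrightarrow> \<not> (p \<subseteq> M \<and> n \<inter> M = {}))"

definition stable_model :: "'a pmodule \<Rightarrow> 'a set \<Rightarrow> bool" where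
  "stable_model P M \<longleftrightarrow> M \<subseteq> At P \<and> sat_constraints (Rules P) M
     \<and> M = least_model (reduct (Rules P) M \<union> {(a, {}) | a. a \<in> M \<inter> Inp P})"

definition AS :: "'a pmodule \<Rightarrow> 'a set set" where
  "AS P = {M. stable_model P M}"

definition relaxed_defined :: "'a pmodule \<Rightarrow> 'a pmodule \<Rightarrow> bool" where
  "relaxed_defined P1 P2 \<longleftrightarrow> Hid P1 \<inter> At P2 = {} \<and> Hid P2 \<inter> At P1 = {}"

definition relaxed_comp :: "'a pmodule \<Rightarrow> 'a pmodule \<Rightarrow> 'a pmodule" where
  "relaxed_comp P1 P2 =
     \<lparr> Rules = Rules P1 \<union> Rules P2,
       Inp = (Inp P1 \<union> Inp P2) - (Outp P1 \<union> Outp P2),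
       Outp = Outp P1 \<union> Outp P2,
       Hid = Hid P1 \<union> Hid P2 \<rparr>"

end

theory Submission
  imports Defs
begin

lemma lm_facts: "least_model {(x, {}) | x. x \<in> A} = A"
  unfolding least_model_def by blast

lemma lm1: "least_model {(a, {})} = {a}"
  unfolding least_model_def by blast

lemma lm2: "least_model {(a, {}), (b, {})} = {a, b}"
  unfolding least_model_def by blast

theorem mainTheorem2:
  shows "\<not> (\<exists>join :: nat set set \<Rightarrow> nat set set \<Rightarrow> nat set set.
            \<forall>P1 P2 :: nat pmodule. wf_module P1 \<longrightarrow> wf_module P2 \<longrightarrow>
              relaxed_defined P1 P2 \<longrightarrow>
              AS (relaxed_comp P1 P2) = join (AS P1) (AS P2))"
proof
  assume "\<exists>join :: nat set set \<Rightarrow> nat set set \<Rightarrow> nat set set.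
            \<forall>P1 P2 :: nat pmodule. wf_module P1 \<longrightarrow> wf_module P2 \<longrightarrow>
              relaxed_defined P1 P2 \<longrightarrow>
              AS (relaxed_comp P1 P2) = join (AS P1) (AS P2)"
  then obtain join :: "nat set set \<Rightarrow> nat set set \<Rightarrow> nat set set" where
    J: "\<And>P1 P2. wf_module P1 \<Longrightarrow> wf_module P2 \<Longrightarrow> relaxed_defined P1 P2 \<Longrightarrow>
              AS (relaxed_comp P1 P2) = join (AS P1) (AS P2)" by blast
  define P1 :: "nat pmodule" where "P1 = \<lparr>Rules = {Normal 0 {} {}}, Inp = {}, Outp = {0,1}, Hid = {}\<rparr>"
  define Q1 :: "nat pmodule" where "Q1 = \<lparr>Rules = {Normal 0 {} {}, Constraint {0,1} {}}, Inp = {}, Outp = {0,1}, Hid = {}\<rparr>"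
  define P2 :: "nat pmodule" where "P2 = \<lparr>Rules = {Normal 1 {} {}}, Inp = {}, Outp = {1}, Hid = {}\<rparr>"
  have w: "wf_module P1" "wf_module Q1" "wf_module P2"
    unfolding P1_def Q1_def P2_def wf_module_def At_def by auto
  have d: "relaxed_defined P1 P2" "relaxed_defined Q1 P2"
    unfolding P1_def Q1_def P2_def relaxed_defined_def by auto
  have r1: "reduct {Normal 0 {} {}} M = {(0::nat, {})}" for M
    unfolding reduct_def by auto
  have r2: "reduct {Normal 0 {} {}, Constraint {0, Suc 0} {}} M = {(0::nat, {})}" for M
    unfolding reduct_def by auto
  have "AS P1 = AS Q1"
  proof -
    have "stable_model P1 M \<longleftrightarrow> M = {0}" for M
      unfolding stable_model_def P1_def At_def sat_constraints_def by (auto simp: r1 lm1)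
    moreover have "stable_model Q1 M \<longleftrightarrow> M = {0}" for M
      unfolding stable_model_def Q1_def At_def sat_constraints_def by (auto simp: r2 lm1)
    ultimately show ?thesis unfolding AS_def by auto
  qed
  hence eq: "AS (relaxed_comp P1 P2) = AS (relaxed_comp Q1 P2)"
    using J[OF w(1) w(3) d(1)] J[OF w(2) w(3) d(2)] by simp
  have r3: "reduct {Normal 0 {} {}, Normal (Suc 0) {} {}} M = {(0::nat, {}), (Suc 0, {})}" for M
    unfolding reduct_def by auto
  have "{0,1} \<in> AS (relaxed_comp P1 P2)"
    unfolding AS_def stable_model_def relaxed_comp_def P1_def P2_def At_def sat_constraints_def
    by (simp add: insert_commute r3 lm2)
  moreover have "{0,1} \<notin> AS (relaxed_comp Q1 P2)"
    unfolding AS_def stable_model_def relaxed_comp_def Q1_def P2_def sat_constraints_def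
    by simp
  ultimately show False using eq by simp
qed

end
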